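(* Let $E$ be a nonempty directed graph with no source vertices, and $n$ a positive integer. Then $\mathcal S(E)$ is strongly $\mathbb Z/n\mathbb Z$-graded via $\phi:\mathcal S(E)\setminus\{0\}\to\mathbb Z/n\mathbb Z$, $\phi(xy^{-1})=(|x|-|y|)+n\mathbb Z$.
   Context: A directed graph $E=(E^0,E^1,\mathbf r,\mathbf s)$; a vertex $v$ is a source if $\mathbf r^{-1}(v)=\emptyset$; paths are finite sequences of edges $e_1\cdots e_n$ with $\mathbf r(e_i)=\mathbf s(e_{i+1})$ (vertices have length 0), $|x|$ is length. $\mathcal S(E)$ is the semigroup with zero generated by $E^0\cup E^1\cup\{e^{-1}:e\in E^1\}$ subject to $vw=\delta_{v,w}v$, $\mathbf s(e)e=e\mathbf r(e)=e$, $\mathbf r(e)e^{-1}=e^{-1}\mathbf s(e)=e^{-1}$, $e^{-1}f=\delta_{e,f}\mathbf r(e)$; nonzero elements are uniquely $xy^{-1}$ with paths $x,y$, $\mathbf r(x)=\mathbf r(y)$. A $\Gamma$-grading is a map $\phi:S\setminus\{0\}\to\Gamma$ with $\phi(st)=\phi(s)\phi(t)$ when $st\neq0$, $S_\alpha=\phi^{-1}(\alpha)\cup\{0\}$; it is strong if $S_\alpha S_\beta=S_{\alpha\beta}$ for all $\alpha,\beta$. *)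

theory Defs
  imports Main
begin

text \<open>A directed graph E is given by a vertex set V, an edge set Ed, and source/range
maps s, r (only their values on Ed matter).  A path is represented as a pair (v, es):
v is its source vertex and es its list of edges (es = [] gives the vertex v itself, of length 0).\<close>

type_synonym ('v,'e) gpath = "'v \<times> 'e list"

definition is_path :: "'v set \<Rightarrow> 'e set \<Rightarrow> ('e \<Rightarrow> 'v) \<Rightarrow> ('e \<Rightarrow> 'v) \<Rightarrow> ('v,'e) gpath \<Rightarrow> bool" where
  "is_path V Ed s r p \<longleftrightarrow> fst p \<in> V \<and> set (snd p) \<subseteq> Ed
     \<and> (snd p \<noteq> [] \<longrightarrow> s (hd (snd p)) = fst p)
     \<and> (\<forall>i. Suc i < length (snd p) \<longrightarrow> r (snd p ! i) = s (snd p ! Suc i))"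

definition path_range :: "('e \<Rightarrow> 'v) \<Rightarrow> ('v,'e) gpath \<Rightarrow> 'v" where
  "path_range r p = (if snd p = [] then fst p else r (last (snd p)))"

definition path_len :: "('v,'e) gpath \<Rightarrow> nat" where
  "path_len p = length (snd p)"

text \<open>Elements of the graph inverse semigroup S(E): None is the zero, Some (x, y) is x y^{-1}
(normal form, with r(x) = r(y)).\<close>

type_synonym ('v,'e) gis_elt = "(('v,'e) gpath \<times> ('v,'e) gpath) option"

definition gis_carrier :: "'v set \<Rightarrow> 'e set \<Rightarrow> ('e \<Rightarrow> 'v) \<Rightarrow> ('e \<Rightarrow> 'v) \<Rightarrow> ('v,'e) gis_elt set" where
  "gis_carrier V Ed s r = insert None
     {Some (x, y) | x y. is_path V Ed s r x \<and> is_path V Ed s r y \<and> path_range r x = path_range r y}"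

text \<open>Multiplication on normal forms: (x y^{-1})(z w^{-1}) = x p w^{-1} if z = y p,
 = x (w q)^{-1} if y = z q, and 0 otherwise.\<close>

fun gis_mult :: "('v,'e) gis_elt \<Rightarrow> ('v,'e) gis_elt \<Rightarrow> ('v,'e) gis_elt" where
  "gis_mult None _ = None"
| "gis_mult _ None = None"
| "gis_mult (Some (x, y)) (Some (z, w)) =
     (if fst y = fst z \<and> take (length (snd y)) (snd z) = snd y
      then Some ((fst x, snd x @ drop (length (snd y)) (snd z)), w)
      else if fst y = fst z \<and> take (length (snd z)) (snd y) = snd z
      then Some (x, (fst w, snd w @ drop (length (snd z)) (snd y)))
      else None)"

text \<open>The degree map phi(x y^{-1}) = (|x| - |y|) mod n, with Z/nZ represented by {0..<n}
and addition modulo n.\<close>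

definition gis_deg :: "nat \<Rightarrow> ('v,'e) gis_elt \<Rightarrow> int" where
  "gis_deg n a = (case a of None \<Rightarrow> 0
      | Some (x, y) \<Rightarrow> (int (path_len x) - int (path_len y)) mod int n)"

definition gis_comp :: "'v set \<Rightarrow> 'e set \<Rightarrow> ('e \<Rightarrow> 'v) \<Rightarrow> ('e \<Rightarrow> 'v) \<Rightarrow> nat \<Rightarrow> int \<Rightarrow> ('v,'e) gis_elt set" where
  "gis_comp V Ed s r n \<alpha> = {a \<in> gis_carrier V Ed s r. a = None \<or> gis_deg n a = \<alpha>}"

definition Zn_grading :: "'v set \<Rightarrow> 'e set \<Rightarrow> ('e \<Rightarrow> 'v) \<Rightarrow> ('e \<Rightarrow> 'v) \<Rightarrow> nat \<Rightarrow> bool" where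
  "Zn_grading V Ed s r n \<longleftrightarrow>
     (\<forall>a\<in>gis_carrier V Ed s r. \<forall>b\<in>gis_carrier V Ed s r.
        a \<noteq> None \<longrightarrow> b \<noteq> None \<longrightarrow> gis_mult a b \<noteq> None \<longrightarrow>
        gis_deg n (gis_mult a b) = (gis_deg n a + gis_deg n b) mod int n)"

definition Zn_strongly_graded :: "'v set \<Rightarrow> 'e set \<Rightarrow> ('e \<Rightarrow> 'v) \<Rightarrow> ('e \<Rightarrow> 'v) \<Rightarrow> nat \<Rightarrow> bool" where
  "Zn_strongly_graded V Ed s r n \<longleftrightarrow> Zn_grading V Ed s r n \<and>
     (\<forall>\<alpha>\<in>{0..<int n}. \<forall>\<beta>\<in>{0..<int n}.
        {gis_mult a b | a b. a \<in> gis_comp V Ed s r n \<alpha> \<and> b \<in> gis_comp V Ed s r n \<beta>}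
          = gis_comp V Ed s r n ((\<alpha> + \<beta>) mod int n))"

end

theory Submission
  imports Defs
begin

fun ch :: "'e set \<Rightarrow> ('e \<Rightarrow> 'v) \<Rightarrow> ('e \<Rightarrow> 'v) \<Rightarrow> 'v \<Rightarrow> 'e list \<Rightarrow> bool" where
  "ch Ed s r v [] = True"
| "ch Ed s r v (e # es) = (e \<in> Ed \<and> s e = v \<and> ch Ed s r (r e) es)"

fun pend :: "('e \<Rightarrow> 'v) \<Rightarrow> 'v \<Rightarrow> 'e list \<Rightarrow> 'v" where
  "pend r v [] = v"
| "pend r v (e # es) = pend r (r e) es"

lemma ch_iff:
  "(set es \<subseteq> Ed \<and> (es \<noteq> [] \<longrightarrow> s (hd es) = v)
     \<and> (\<forall>i. Suc i < length es \<longrightarrow> r (es ! i) = s (es ! Suc i))) = ch Ed s r v es"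
proof (induction es arbitrary: v)
  case Nil
  then show ?case by simp
next
  case (Cons e es)
  have idx: "(\<forall>i. Suc i < length (e # es) \<longrightarrow> r ((e # es) ! i) = s ((e # es) ! Suc i))
     = ((es \<noteq> [] \<longrightarrow> r e = s (hd es)) \<and> (\<forall>i. Suc i < length es \<longrightarrow> r (es ! i) = s (es ! Suc i)))"
  proof
    assume H: "\<forall>i. Suc i < length (e # es) \<longrightarrow> r ((e # es) ! i) = s ((e # es) ! Suc i)"
    show "(es \<noteq> [] \<longrightarrow> r e = s (hd es)) \<and> (\<forall>i. Suc i < length es \<longrightarrow> r (es ! i) = s (es ! Suc i))"
    proof (intro conjI impI allI)
      assume "es \<noteq> []" then show "r e = s (hd es)" using H[rule_format, of 0] by (simp add: hd_conv_nth)
    next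
      fix i assume "Suc i < length es" then show "r (es ! i) = s (es ! Suc i)"
        using H[rule_format, of "Suc i"] by simp
    qed
  next
    assume H: "(es \<noteq> [] \<longrightarrow> r e = s (hd es)) \<and> (\<forall>i. Suc i < length es \<longrightarrow> r (es ! i) = s (es ! Suc i))"
    show "\<forall>i. Suc i < length (e # es) \<longrightarrow> r ((e # es) ! i) = s ((e # es) ! Suc i)"
    proof (intro allI impI)
      fix i assume "Suc i < length (e # es)"
      then show "r ((e # es) ! i) = s ((e # es) ! Suc i)"
        using H by (cases i) (auto simp: hd_conv_nth)
    qed
  qed
  show ?case unfolding idx using Cons.IH[of "r e"] by auto
qed

lemma is_path_iff: "is_path V Ed s r p = (fst p \<in> V \<and> ch Ed s r (fst p) (snd p))"
  unfolding is_path_def using ch_iff[of "snd p" Ed s "fst p" r] by blast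

lemma range_eq: "path_range (r::'e \<Rightarrow> 'v) p = pend r (fst p) (snd p)"
proof -
  have "\<And>v. es \<noteq> [] \<Longrightarrow> pend r v es = r (last es)" for es :: "'e list" and r :: "'e \<Rightarrow> 'v"
    by (induction es) (auto simp: neq_Nil_conv) 
  then show ?thesis unfolding path_range_def by (cases "snd p") auto
qed

lemma ch_app: "ch Ed s r v (xs @ ys) = (ch Ed s r v xs \<and> ch Ed s r (pend r v xs) ys)"
  by (induction xs arbitrary: v) auto

lemma pend_app: "pend r v (xs @ ys) = pend r (pend r v xs) ys"
  by (induction xs arbitrary: v) auto

lemma carrier_Some:
  "Some (x, y) \<in> gis_carrier V Ed s r \<longleftrightarrow>
    fst x \<in> V \<and> ch Ed s r (fst x) (snd x) \<and> fst y \<in> V \<and> ch Ed s r (fst y) (snd y)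
    \<and> pend r (fst x) (snd x) = pend r (fst y) (snd y)"
  unfolding gis_carrier_def by (cases x; cases y) (auto simp: is_path_iff range_eq)

lemma mult_closed:
  assumes a: "a \<in> gis_carrier V Ed s r" and b: "b \<in> gis_carrier V Ed s r" and n: "0 < n"
  shows "gis_mult a b \<in> gis_carrier V Ed s r \<and>
    (a \<noteq> None \<longrightarrow> b \<noteq> None \<longrightarrow> gis_mult a b \<noteq> None \<longrightarrow>
        gis_deg n (gis_mult a b) = (gis_deg n a + gis_deg n b) mod int n)"
proof (cases "a = None \<or> b = None")
  case True
  then show ?thesis using a b by (cases a; cases b) auto
next
  case False
  then obtain x y z w where ab: "a = Some (x, y)" "b = Some (z, w)" by auto
  obtain x1 x2 where xx: "x = (x1, x2)" by force
  obtain y1 y2 where yy: "y = (y1, y2)" by force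
  obtain z1 z2 where zz: "z = (z1, z2)" by force
  obtain w1 w2 where ww: "w = (w1, w2)" by force
  note A = a[unfolded ab xx yy, unfolded carrier_Some, simplified]
  note B = b[unfolded ab zz ww, unfolded carrier_Some, simplified]
  show ?thesis
  proof (cases "y1 = z1 \<and> take (length y2) z2 = y2")
    case True
    define p where "p = drop (length y2) z2"
    have z2: "z2 = y2 @ p" unfolding p_def using True by (metis append_take_drop_id)
    have m: "gis_mult a b = Some ((x1, x2 @ p), (w1, w2))"
      using True unfolding ab xx yy zz ww p_def by simp
    have c1: "ch Ed s r (pend r x1 x2) p" using A B True z2 by (simp add: ch_app)
    have "gis_mult a b \<in> gis_carrier V Ed s r"
      unfolding m carrier_Some using A B c1 True z2 by (simp add: ch_app pend_app)
    moreover have "gis_deg n (gis_mult a b) = (gis_deg n a + gis_deg n b) mod int n"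
      unfolding m ab xx yy zz ww gis_deg_def path_len_def using z2 True
      by (simp add: mod_add_eq algebra_simps)
    ultimately show ?thesis by simp
  next
    case F: False
    show ?thesis
    proof (cases "y1 = z1 \<and> take (length z2) y2 = z2")
      case True
      define q where "q = drop (length z2) y2"
      have y2: "y2 = z2 @ q" unfolding q_def using True by (metis append_take_drop_id)
      have m: "gis_mult a b = Some ((x1, x2), (w1, w2 @ q))"
        using True F unfolding ab xx yy zz ww q_def by simp
      have c1: "ch Ed s r (pend r w1 w2) q" using A B True y2 by (simp add: ch_app)
      have "gis_mult a b \<in> gis_carrier V Ed s r"
        unfolding m carrier_Some using A B c1 True y2 by (simp add: ch_app pend_app)
      moreover have "gis_deg n (gis_mult a b) = (gis_deg n a + gis_deg n b) mod int n"
        unfolding m ab xx yy zz ww gis_deg_def path_len_def using y2 True F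
        by (simp add: mod_add_eq algebra_simps)
      ultimately show ?thesis by simp
    next
      case False
      then have "gis_mult a b = None" using F unfolding ab xx yy zz ww by simp
      then show ?thesis unfolding gis_carrier_def by simp
    qed
  qed
qed

lemma back_path:
  assumes graph: "\<forall>e\<in>Ed. s e \<in> V \<and> r e \<in> V"
    and no_sources: "\<forall>v\<in>V. \<exists>e\<in>Ed. r e = v"
    and v: "v \<in> V"
  shows "\<exists>u es. u \<in> V \<and> ch Ed s r u es \<and> pend r u es = v \<and> length es = k"
proof (induction k)
  case 0
  then show ?case using v by auto
next
  case (Suc k)
  then obtain u es where u: "u \<in> V" "ch Ed s r u es" "pend r u es = v" "length es = k" by blast
  then obtain e where e: "e \<in> Ed" "r e = u" using no_sources by blast
  show ?case
    by (rule exI[of _ "s e"], rule exI[of _ "e # es"]) (use e u graph in auto)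
qed

theorem lemma8p7:
  fixes V :: "'v set" and Ed :: "'e set" and s r :: "'e \<Rightarrow> 'v" and n :: nat
  assumes graph: "\<forall>e\<in>Ed. s e \<in> V \<and> r e \<in> V"
    and nonempty: "V \<noteq> {}"
    and no_sources: "\<forall>v\<in>V. \<exists>e\<in>Ed. r e = v"
    and npos: "0 < n"
  shows "Zn_strongly_graded V Ed s r n"
  unfolding Zn_strongly_graded_def
proof (intro conjI ballI)
  show "Zn_grading V Ed s r n" unfolding Zn_grading_def using mult_closed npos by blast
next
  fix \<alpha> \<beta> assume al: "\<alpha> \<in> {0..<int n}" and be: "\<beta> \<in> {0..<int n}"
  show "{gis_mult a b | a b. a \<in> gis_comp V Ed s r n \<alpha> \<and> b \<in> gis_comp V Ed s r n \<beta>}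
          = gis_comp V Ed s r n ((\<alpha> + \<beta>) mod int n)"
  proof (intro equalityI subsetI)
    fix c assume "c \<in> {gis_mult a b | a b. a \<in> gis_comp V Ed s r n \<alpha> \<and> b \<in> gis_comp V Ed s r n \<beta>}"
    then obtain a b where c: "c = gis_mult a b" and a: "a \<in> gis_comp V Ed s r n \<alpha>"
      and b: "b \<in> gis_comp V Ed s r n \<beta>" by blast
    have ac: "a \<in> gis_carrier V Ed s r" and bc: "b \<in> gis_carrier V Ed s r"
      using a b unfolding gis_comp_def by auto
    show "c \<in> gis_comp V Ed s r n ((\<alpha> + \<beta>) mod int n)"
    proof (cases "a = None \<or> b = None \<or> c = None")
      case True
      then have "c = None" unfolding c by (cases a; cases b) auto
      then show ?thesis unfolding gis_comp_def gis_carrier_def by simp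
    next
      case False
      then have "gis_deg n a = \<alpha>" "gis_deg n b = \<beta>" using a b unfolding gis_comp_def by auto
      then show ?thesis using mult_closed[OF ac bc npos] False unfolding gis_comp_def c by auto
    qed
  next
    fix c assume cc: "c \<in> gis_comp V Ed s r n ((\<alpha> + \<beta>) mod int n)"
    show "c \<in> {gis_mult a b | a b. a \<in> gis_comp V Ed s r n \<alpha> \<and> b \<in> gis_comp V Ed s r n \<beta>}"
    proof (cases c)
      case None
      have "gis_mult None None = c" using None by simp
      moreover have "None \<in> gis_comp V Ed s r n \<gamma>" for \<gamma>
        unfolding gis_comp_def gis_carrier_def by simp
      ultimately show ?thesis by blast
    next
      case (Some xy)
      obtain x1 x2 y1 y2 where c: "c = Some ((x1, x2), (y1, y2))" using Some by (cases xy) force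
      have C: "x1 \<in> V" "ch Ed s r x1 x2" "y1 \<in> V" "ch Ed s r y1 y2" "pend r x1 x2 = pend r y1 y2"
      proof -
        have "Some ((x1, x2), (y1, y2)) \<in> gis_carrier V Ed s r" using cc unfolding c gis_comp_def by auto
        then show "x1 \<in> V" "ch Ed s r x1 x2" "y1 \<in> V" "ch Ed s r y1 y2" "pend r x1 x2 = pend r y1 y2"
          unfolding carrier_Some by auto
      qed
      have dc: "(int (length x2) - int (length y2)) mod int n = (\<alpha> + \<beta>) mod int n"
        using cc unfolding c gis_comp_def gis_deg_def path_len_def by auto
      define k where "k = nat ((- \<alpha>) mod int n)"
      have kk: "int k = (- \<alpha>) mod int n" unfolding k_def using npos by simp
      obtain u p where p: "u \<in> V" "ch Ed s r u p" "pend r u p = x1" "length p = k"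
        using back_path[OF graph no_sources C(1)] by blast
      define a where "a = Some ((x1, []::'e list), (u, p))"
      define b where "b = Some ((u, p @ x2), (y1, y2))"
      have "gis_mult a b = c" unfolding a_def b_def c by simp
      moreover have "a \<in> gis_comp V Ed s r n \<alpha>"
        unfolding a_def gis_comp_def gis_deg_def path_len_def
        using p C al kk by (simp add: mod_minus_eq carrier_Some)
      moreover have "b \<in> gis_comp V Ed s r n \<beta>"
      proof -
        have "(int (length (p @ x2)) - int (length y2)) mod int n
            = (int k + (int (length x2) - int (length y2))) mod int n" using p by (simp add: algebra_simps)
        also have "\<dots> = ((- \<alpha>) mod int n + (int (length x2) - int (length y2)) mod int n) mod int n"
          unfolding kk by (metis mod_add_eq mod_mod_trivial)
        also have "\<dots> = ((- \<alpha>) + (\<alpha> + \<beta>)) mod int n" using dc by (simp add: mod_add_eq)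
        also have "\<dots> = \<beta>" using be by simp
        finally show ?thesis
          unfolding b_def gis_comp_def gis_deg_def path_len_def
          using p C by (simp add: ch_app pend_app carrier_Some)
      qed
      ultimately show ?thesis by blast
    qed
  qed
qed

end
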